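(* Let $P$ be a finite set of points in $\mathbb{R}^2$ in general position. Any point $p\in P$ is active for at most three points on the first convex layer of $P$.
   Context: Convex layers: $L^1$ is the set of vertices of the convex hull of $P$, and $L^k$ is the set of vertices of the convex hull of $P\setminus(L^1\cup\dots\cup L^{k-1})$. Let $(t,u,v)$ be consecutive points of $L^1$ in clockwise order. A point $p$ is active for $u$ if, upon deleting $u$ from $P$ and recomputing the first and second convex layers, $p$ moves to the first layer. $A(u)$ denotes the set of points active for $u$. *)

theory Defs
  imports "HOL-Analysis.Analysis"
begin

definition general_position :: "(real^2) set \<Rightarrow> bool" where
  "general_position P \<longleftrightarrow>
     (\<forall>a\<in>P. \<forall>b\<in>P. \<forall>c\<in>P. a \<noteq> b \<and> a \<noteq> c \<and> b \<noteq> c \<longrightarrow> \<not> collinear {a, b, c})"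

definition layer1 :: "(real^2) set \<Rightarrow> (real^2) set" where
  "layer1 P = {p \<in> P. p extreme_point_of (convex hull P)}"

fun layer :: "nat \<Rightarrow> (real^2) set \<Rightarrow> (real^2) set" where
  "layer 0 P = {}"
| "layer (Suc 0) P = layer1 P"
| "layer (Suc (Suc k)) P = layer1 (P - (\<Union>i\<in>{1..Suc k}. layer i P))"

definition active :: "(real^2) set \<Rightarrow> real^2 \<Rightarrow> real^2 \<Rightarrow> bool" where
  "active P p u \<longleftrightarrow> u \<in> layer 1 P \<and> p \<in> P \<and> p \<notin> layer 1 P \<and> p \<in> layer 1 (P - {u})"

definition active_set :: "(real^2) set \<Rightarrow> real^2 \<Rightarrow> (real^2) set" where
  "active_set P u = {p. active P p u}"

end

theory Submission
  imports Defs
begin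

lemma extreme_not_in_hull_minus:
  assumes "x extreme_point_of (convex hull T)"
  shows "x \<notin> convex hull (T - {x})"
proof
  assume h: "x \<in> convex hull (T - {x})"
  have c: "convex (convex hull T - {x})"
    using assms extreme_point_of_stillconvex[of "convex hull T" x] by simp
  have "T - {x} \<subseteq> convex hull T - {x}" using hull_subset[of T convex] by blast
  then have "convex hull (T - {x}) \<subseteq> convex hull T - {x}"
    using c by (simp add: hull_minimal)
  then show False using h by blast
qed

theorem lemma1:
  fixes P :: "(real^2) set" and p :: "real^2"
  assumes "finite P" and "general_position P" and "p \<in> P"
  shows "card {u \<in> layer 1 P. p \<in> active_set P u} \<le> 3"
proof (cases "p \<in> layer1 P")
  case True
  then have "{u \<in> layer 1 P. p \<in> active_set P u} = {}"
    by (auto simp: active_set_def active_def)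
  then show ?thesis by (metis card.empty zero_le)
next
  case False
  have "p \<in> convex hull (P - {p})"
  proof (rule ccontr)
    assume "p \<notin> convex hull (P - {p})"
    then have "p extreme_point_of (convex hull (insert p (P - {p})))"
      using assms(1) by (intro extreme_point_of_convex_hull_insert) auto
    moreover have "insert p (P - {p}) = P" using assms(3) by blast
    ultimately show False using False assms(3) by (simp add: layer1_def)
  qed
  then obtain S where S: "finite S" "S \<subseteq> P - {p}" "card S \<le> DIM(real^2) + 1"
     "p \<in> convex hull S"
    using caratheodory[of "P - {p}"] by blast
  have sub: "{u \<in> layer 1 P. p \<in> active_set P u} \<subseteq> S"
  proof
    fix u assume u: "u \<in> {u \<in> layer 1 P. p \<in> active_set P u}"
    then have "p extreme_point_of convex hull (P - {u})"
      by (simp add: active_set_def active_def layer1_def)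
    then have nin: "p \<notin> convex hull (P - {u} - {p})" by (rule extreme_not_in_hull_minus)
    show "u \<in> S"
    proof (rule ccontr)
      assume "u \<notin> S"
      then have "S \<subseteq> P - {u} - {p}" using S(2) by blast
      then have "convex hull S \<subseteq> convex hull (P - {u} - {p})" by (rule hull_mono)
      then show False using nin S(4) by blast
    qed
  qed
  have "card {u \<in> layer 1 P. p \<in> active_set P u} \<le> card S"
    using card_mono[OF S(1) sub] .
  then show ?thesis using S(3) by simp
qed

end
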